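(* Let $\psi$ be an injective map from the positive integers to the positive integers and let $A=\{\psi(n): n\ge 1\}$. For every nonnegative integer $n$, \[ \bar{p}^{A}_{1}(n)=\sum_{(N_0,N_1,N_2,\dots)}\ \prod_{j\ge0}\bar{p}^{A}(N_j), \] where the sum runs over all sequences $(N_0,N_1,\dots)$ of nonnegative integers with $n=\sum_{i\ge0}2^{i}N_i$.
   Context: For a set $A$ of positive integers: $\bar{p}^{A}(n)=E^{A}(n)-O^{A}(n)$, where $E^{A}(n)$ (resp. $O^{A}(n)$) is the number of partitions of $n$ into parts from $A$ (no restriction on multiplicities) with an even (resp. odd) number of parts, and $\bar{p}^{A}(0)=1$. For a positive integer $\alpha$, $\bar{p}^{A}_{\alpha}(n)=E^{A}_{\alpha}(n)-O^{A}_{\alpha}(n)$, where $E^{A}_{\alpha}(n)$ (resp. $O^{A}_{\alpha}(n)$) is the number of partitions of $n$ into parts from $A$ in which each part occurs at most $\alpha$ times and having an even (resp. odd) number of parts, and $\bar{p}^{A}_{\alpha}(0)=1$. *)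

theory Defs
  imports Main "HOL-Library.Multiset"
begin

definition parts_from :: "nat set \<Rightarrow> nat \<Rightarrow> nat multiset set" where
  "parts_from A n = {M. (\<forall>x \<in># M. x > 0 \<and> x \<in> A) \<and> sum_mset M = n}"

definition parts_from_bounded :: "nat set \<Rightarrow> nat \<Rightarrow> nat \<Rightarrow> nat multiset set" where
  "parts_from_bounded A \<alpha> n = {M \<in> parts_from A n. \<forall>x. count M x \<le> \<alpha>}"

definition E_A :: "nat set \<Rightarrow> nat \<Rightarrow> nat" where
  "E_A A n = card {M \<in> parts_from A n. even (size M)}"
definition O_A :: "nat set \<Rightarrow> nat \<Rightarrow> nat" where
  "O_A A n = card {M \<in> parts_from A n. odd (size M)}"

definition pbar :: "nat set \<Rightarrow> nat \<Rightarrow> int" where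
  "pbar A n = (if n = 0 then 1 else int (E_A A n) - int (O_A A n))"

definition E_A_bd :: "nat set \<Rightarrow> nat \<Rightarrow> nat \<Rightarrow> nat" where
  "E_A_bd A \<alpha> n = card {M \<in> parts_from_bounded A \<alpha> n. even (size M)}"
definition O_A_bd :: "nat set \<Rightarrow> nat \<Rightarrow> nat \<Rightarrow> nat" where
  "O_A_bd A \<alpha> n = card {M \<in> parts_from_bounded A \<alpha> n. odd (size M)}"

definition pbar_bd :: "nat set \<Rightarrow> nat \<Rightarrow> nat \<Rightarrow> int" where
  "pbar_bd A \<alpha> n = (if n = 0 then 1 else int (E_A_bd A \<alpha> n) - int (O_A_bd A \<alpha> n))"

definition bin_seqs :: "nat \<Rightarrow> (nat \<Rightarrow> nat) set" where
  "bin_seqs n = {N. finite {i. N i \<noteq> 0} \<and> (\<Sum>i\<in>{i. N i \<noteq> 0}. 2 ^ i * N i) = n}"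

end

theory Submission
  imports Defs "HOL-Computational_Algebra.Formal_Power_Series"
begin


lemma mem_le_sum: "x \<in># M \<Longrightarrow> x \<le> sum_mset (M::nat multiset)"
  by (metis le_add1 multi_member_split sum_mset.add_mset)

lemma size_le_sum: "(\<forall>x\<in>#M. x > 0) \<Longrightarrow> size M \<le> sum_mset (M::nat multiset)"
proof (induction M)
  case empty then show ?case by simp
next
  case (add x M) then show ?case by auto
qed

lemma finite_parts_from: "finite (parts_from A n)"
proof -
  have "parts_from A n \<subseteq> (\<Union>m\<in>{..n}. multisets_of_size {1..n} m)"
    unfolding parts_from_def multisets_of_size_def
    using mem_le_sum size_le_sum by (force simp: Suc_le_eq)
  then show ?thesis by (rule finite_subset) auto
qed

lemma finite_parts_from_bounded: "finite (parts_from_bounded A a n)"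
  unfolding parts_from_bounded_def using finite_parts_from by simp

definition S :: "nat set \<Rightarrow> nat \<Rightarrow> int" where
  "S A n = (\<Sum>M\<in>parts_from A n. (-1) ^ size M)"
definition T :: "nat set \<Rightarrow> nat \<Rightarrow> int" where
  "T A n = (\<Sum>M\<in>parts_from_bounded A 1 n. (-1) ^ size M)"

lemma parts_from_0: "parts_from A 0 = {{#}}"
  unfolding parts_from_def
  by auto (metis mem_le_sum multiset_nonemptyE le_zero_eq not_less0)

lemma parts_from_bounded_0: "parts_from_bounded A a 0 = {{#}}"
  unfolding parts_from_bounded_def parts_from_0 by auto

lemma signed_split:
  assumes "finite X"
  shows "(\<Sum>M\<in>X. (-1::int) ^ size M) = int (card {M\<in>X. even (size M)}) - int (card {M\<in>X. odd (size M)})"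
proof -
  have "(\<Sum>M\<in>X. (-1::int) ^ size M) = (\<Sum>M\<in>{M\<in>X. even (size M)}. (-1::int) ^ size M) + (\<Sum>M\<in>{M\<in>X. odd (size M)}. (-1::int) ^ size M)"
    using assms by (subst sum.union_disjoint[symmetric]) (auto intro: sum.cong)
  also have "\<dots> = int (card {M\<in>X. even (size M)}) - int (card {M\<in>X. odd (size M)})"
    by simp
  finally show ?thesis .
qed

lemma pbar_S: "pbar A n = S A n"
  unfolding pbar_def S_def E_A_def O_A_def
  using signed_split[OF finite_parts_from] by (cases "n = 0") (simp_all add: parts_from_0)

lemma pbar_bd_T: "pbar_bd A 1 n = T A n"
  unfolding pbar_bd_def T_def E_A_bd_def O_A_bd_def
  using signed_split[OF finite_parts_from_bounded] by (cases "n = 0") (simp_all add: parts_from_bounded_0)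



lemma sum_add_mset_image: "(\<Sum>M\<in>add_mset a ` X. f M) = (\<Sum>M\<in>X. f (add_mset a M))"
  by (subst sum.reindex) (auto simp: inj_on_def)

lemma sum_mset_remove: "a \<in># M \<Longrightarrow> sum_mset M = a + sum_mset (M - {#a#})"
proof -
  assume "a \<in># M"
  then have "add_mset a (M - {#a#}) = M" by (rule insert_DiffM)
  then have "sum_mset (add_mset a (M - {#a#})) = sum_mset M" by simp
  then show ?thesis by simp
qed

lemma S_rec:
  assumes "a > 0" "a \<notin> B"
  shows "S (insert a B) n = S B n - (if a \<le> n then S (insert a B) (n - a) else 0)"
proof -
  let ?P = "parts_from (insert a B) n"
  have fin: "finite ?P" by (rule finite_parts_from)
  have split: "S (insert a B) n = (\<Sum>M\<in>{M\<in>?P. a \<notin># M}. (-1) ^ size M) + (\<Sum>M\<in>{M\<in>?P. a \<in># M}. (-1) ^ size M)"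
    unfolding S_def using fin by (subst sum.union_disjoint[symmetric]) (auto intro: sum.cong)
  have e1: "{M\<in>?P. a \<notin># M} = parts_from B n"
    unfolding parts_from_def using assms by auto
  have e2: "(\<Sum>M\<in>{M\<in>?P. a \<in># M}. (-1::int) ^ size M) = (if a \<le> n then - S (insert a B) (n - a) else 0)"
  proof (cases "a \<le> n")
    case True
    have "{M\<in>?P. a \<in># M} = add_mset a ` parts_from (insert a B) (n - a)"
    proof (rule set_eqI, rule iffI)
      fix M assume M: "M \<in> {M\<in>?P. a \<in># M}"
      then have "M = add_mset a (M - {#a#})" by simp
      moreover have "M - {#a#} \<in> parts_from (insert a B) (n - a)"
      proof -
        have c: "\<forall>x\<in>#M. 0 < x \<and> x \<in> insert a B" "sum_mset M = n" "a \<in># M"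
          using M unfolding parts_from_def by auto
        have "sum_mset M = a + sum_mset (M - {#a#})"
          using c(3) by (rule sum_mset_remove)
        then show ?thesis using c unfolding parts_from_def by (auto dest: in_diffD)
      qed
      ultimately show "M \<in> add_mset a ` parts_from (insert a B) (n - a)" by blast
    next
      fix M assume "M \<in> add_mset a ` parts_from (insert a B) (n - a)"
      then show "M \<in> {M\<in>?P. a \<in># M}"
        using True assms unfolding parts_from_def by auto
    qed
    then have "(\<Sum>M\<in>{M\<in>?P. a \<in># M}. (-1::int) ^ size M) = (\<Sum>M\<in>parts_from (insert a B) (n - a). (-1::int) ^ size (add_mset a M))"
      by (simp add: sum_add_mset_image)
    also have "\<dots> = - S (insert a B) (n - a)"
      unfolding S_def by (simp add: sum_negf)
    finally show ?thesis using True by simp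
  next
    case False
    have emp: "{M\<in>?P. a \<in># M} = {}"
      using False unfolding parts_from_def by (auto dest: mem_le_sum)
    show ?thesis unfolding emp using False by simp
  qed
  show ?thesis using split e1 e2 unfolding S_def by simp
qed

lemma T_rec:
  assumes "a > 0" "a \<notin> B"
  shows "T (insert a B) n = T B n - (if a \<le> n then T B (n - a) else 0)"
proof -
  let ?P = "parts_from_bounded (insert a B) 1 n"
  have fin: "finite ?P" by (rule finite_parts_from_bounded)
  have split: "T (insert a B) n = (\<Sum>M\<in>{M\<in>?P. a \<notin># M}. (-1) ^ size M) + (\<Sum>M\<in>{M\<in>?P. a \<in># M}. (-1) ^ size M)"
    unfolding T_def using fin by (subst sum.union_disjoint[symmetric]) (auto intro: sum.cong)
  have e1: "{M\<in>?P. a \<notin># M} = parts_from_bounded B 1 n"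
    unfolding parts_from_bounded_def parts_from_def using assms by auto
  have e2: "(\<Sum>M\<in>{M\<in>?P. a \<in># M}. (-1::int) ^ size M) = (if a \<le> n then - T B (n - a) else 0)"
  proof (cases "a \<le> n")
    case True
    have "{M\<in>?P. a \<in># M} = add_mset a ` parts_from_bounded B 1 (n - a)"
    proof (rule set_eqI, rule iffI)
      fix M assume M: "M \<in> {M\<in>?P. a \<in># M}"
      then have "M = add_mset a (M - {#a#})" by simp
      moreover have "M - {#a#} \<in> parts_from_bounded B 1 (n - a)"
      proof -
        have c: "\<forall>x. count M x \<le> 1" "a \<in># M" "\<forall>x\<in>#M. 0 < x \<and> x \<in> insert a B" "sum_mset M = n"
          using M unfolding parts_from_bounded_def parts_from_def by auto
        have ca: "count M a = 1" proof -
          have "count M a > 0" using c(2) by simp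
          then show ?thesis using c(1)[rule_format, of a] by linarith
        qed
        have "\<forall>x\<in>#M - {#a#}. 0 < x \<and> x \<in> B"
        proof
          fix x assume x: "x \<in># M - {#a#}"
          have "x \<noteq> a"
          proof
            assume xa: "x = a"
            have z: "count (M - {#a#}) a = 0" using ca by simp
            have "0 < count (M - {#a#}) a" using x xa by (simp only: count_greater_zero_iff)
            then show False using z by linarith
          qed
          then show "0 < x \<and> x \<in> B" using c(3) x by (auto dest: in_diffD)
        qed
        moreover have "sum_mset (M - {#a#}) = n - a"
        proof -
          have "sum_mset M = a + sum_mset (M - {#a#})"
            using c(2) by (rule sum_mset_remove)
          then show ?thesis using c(4) by simp
        qed
        moreover have "\<forall>x. count (M - {#a#}) x \<le> 1"
        proof
          fix x show "count (M - {#a#}) x \<le> 1" using c(1)[rule_format, of x] by simp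
        qed
        ultimately show ?thesis unfolding parts_from_bounded_def parts_from_def by auto
      qed
      ultimately show "M \<in> add_mset a ` parts_from_bounded B 1 (n - a)" by blast
    next
      fix M assume "M \<in> add_mset a ` parts_from_bounded B 1 (n - a)"
      then obtain M' where M': "M = add_mset a M'" "M' \<in> parts_from_bounded B 1 (n - a)" by blast
      then have "a \<notin># M'" using assms unfolding parts_from_bounded_def parts_from_def by auto
      have m1: "\<forall>x\<in>#M'. 0 < x \<and> x \<in> B" "sum_mset M' = n - a" "\<forall>x. count M' x \<le> 1"
        using M'(2) unfolding parts_from_bounded_def parts_from_def by auto
      have "\<forall>x. count M x \<le> 1"
      proof
        fix x show "count M x \<le> 1"
          using m1(3)[rule_format, of x] \<open>a \<notin># M'\<close> M'(1) by (auto simp: not_in_iff)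
      qed
      then show "M \<in> {M\<in>?P. a \<in># M}"
        using M'(1) m1 True assms unfolding parts_from_bounded_def parts_from_def by auto
    qed
    then have "(\<Sum>M\<in>{M\<in>?P. a \<in># M}. (-1::int) ^ size M) = (\<Sum>M\<in>parts_from_bounded B 1 (n - a). (-1::int) ^ size (add_mset a M))"
      by (simp add: sum_add_mset_image)
    also have "\<dots> = - T B (n - a)"
      unfolding T_def by (simp add: sum_negf)
    finally show ?thesis using True by simp
  next
    case False
    have emp: "{M\<in>?P. a \<in># M} = {}"
      using False unfolding parts_from_bounded_def parts_from_def by (auto dest: mem_le_sum)
    show ?thesis unfolding emp using False by simp
  qed
  show ?thesis using split e1 e2 unfolding T_def by simp
qed


unbundle fps_syntax

lemma parts_from_empty: "parts_from {} n = (if n = 0 then {{#}} else {})"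
  by (cases "n = 0") (auto simp: parts_from_0, auto simp: parts_from_def)

lemma S_empty: "S {} n = (if n = 0 then 1 else 0)"
  unfolding S_def by (simp add: parts_from_empty)

lemma T_empty: "T {} n = (if n = 0 then 1 else 0)"
  unfolding T_def by (cases "n = 0") (simp_all add: parts_from_bounded_0, simp add: parts_from_bounded_def parts_from_empty)

lemma coeff_one_plus: "((f :: 'a::comm_ring_1 fps) * (1 + fps_X ^ k)) $ n = f $ n + (if n < k then 0 else f $ (n - k))"
  by (simp add: distrib_left fps_X_power_mult_right_nth)

lemma coeff_one_minus: "((1 - fps_X ^ k) * (f :: 'a::comm_ring_1 fps)) $ n = f $ n - (if n < k then 0 else f $ (n - k))"
proof -
  have "(1 - fps_X ^ k) * f = f - fps_X ^ k * f" by (simp add: algebra_simps)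
  then show ?thesis by (simp add: fps_X_power_mult_nth)
qed

lemma S_fps:
  assumes "finite B" "\<forall>b\<in>B. b > 0"
  shows "Abs_fps (S B) * (\<Prod>a\<in>B. 1 + fps_X ^ a) = (1 :: int fps)"
  using assms
proof (induction B rule: finite_induct)
  case empty
  show ?case by (rule fps_ext) (simp add: S_empty)
next
  case (insert a B)
  have "Abs_fps (S (insert a B)) * (1 + fps_X ^ a) = Abs_fps (S B)"
  proof (rule fps_ext)
    fix n
    show "(Abs_fps (S (insert a B)) * (1 + fps_X ^ a)) $ n = Abs_fps (S B) $ n"
      unfolding coeff_one_plus using S_rec[of a B n] insert by auto
  qed
  then have "Abs_fps (S (insert a B)) * (\<Prod>a\<in>insert a B. 1 + fps_X ^ a)
      = Abs_fps (S B) * (\<Prod>a\<in>B. 1 + fps_X ^ a)"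
    using insert by (simp add: mult.assoc[symmetric])
  then show ?case using insert by simp
qed

lemma T_fps:
  assumes "finite B" "\<forall>b\<in>B. b > 0" "c > 0"
  shows "Abs_fps (\<lambda>n. if c dvd n then T B (n div c) else 0) = (\<Prod>a\<in>B. 1 - fps_X ^ (c * a) :: int fps)"
  using assms
proof (induction B rule: finite_induct)
  case empty
  show ?case
  proof (rule fps_ext)
    fix n show "Abs_fps (\<lambda>n. if c dvd n then T {} (n div c) else 0) $ n = (\<Prod>a\<in>{}. 1 - fps_X ^ (c * a) :: int fps) $ n"
      using \<open>c > 0\<close> by (auto simp: T_empty elim!: dvdE)
  qed
next
  case (insert a B)
  let ?H = "\<lambda>B. Abs_fps (\<lambda>n. if c dvd n then T B (n div c) else 0) :: int fps"
  have "?H (insert a B) = (1 - fps_X ^ (c * a)) * ?H B"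
  proof (rule fps_ext)
    fix n
    show "?H (insert a B) $ n = ((1 - fps_X ^ (c * a)) * ?H B) $ n"
    proof (cases "c dvd n")
      case True
      then obtain m where m: "n = c * m" by blast
      have "n < c * a \<longleftrightarrow> m < a" using m \<open>c > 0\<close> by simp
      moreover have "n - c * a = c * (m - a)" using m by (simp add: right_diff_distrib')
      ultimately show ?thesis unfolding coeff_one_minus
        using T_rec[of a B m] insert.hyps insert.prems m \<open>c > 0\<close> by auto
    next
      case False
      have "\<not> (c * a \<le> n \<and> c dvd (n - c * a))"
      proof
        assume h: "c * a \<le> n \<and> c dvd (n - c * a)"
        then have "c dvd (n - c * a + c * a)" by (intro dvd_add) auto
        with h False show False by simp
      qed
      then show ?thesis unfolding coeff_one_minus using False by auto
    qed
  qed
  then show ?case using insert by simp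
qed

lemma T_conv:
  assumes "finite B" "\<forall>b\<in>B. b > 0"
  shows "T B n = (\<Sum>i=0..n. S B i * (if even (n - i) then T B ((n - i) div 2) else 0))"
proof -
  let ?F = "Abs_fps (S B)"
  let ?G = "Abs_fps (T B)"
  let ?H = "Abs_fps (\<lambda>n. if 2 dvd n then T B (n div 2) else 0) :: int fps"
  let ?P = "(\<Prod>a\<in>B. 1 + fps_X ^ a) :: int fps"
  have G: "?G = (\<Prod>a\<in>B. 1 - fps_X ^ a)"
    using T_fps[OF assms, of 1] by simp
  have H: "?H = (\<Prod>a\<in>B. 1 - fps_X ^ (2 * a))"
    using T_fps[OF assms, of 2] by simp
  have "(\<Prod>a\<in>B. 1 - fps_X ^ (2 * a)) = (\<Prod>a\<in>B. (1 - fps_X ^ a) * (1 + fps_X ^ a) :: int fps)"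
  proof (rule prod.cong)
    fix a
    have "(fps_X :: int fps) ^ (2 * a) = fps_X ^ a * fps_X ^ a" by (simp add: mult_2 power_add)
    then show "1 - (fps_X :: int fps) ^ (2 * a) = (1 - fps_X ^ a) * (1 + fps_X ^ a)"
      by (simp add: algebra_simps)
  qed simp
  then have "?H = ?G * ?P" using G H by (simp add: prod.distrib)
  then have "?F * ?H = ?G * (?F * ?P)" by (simp add: algebra_simps)
  then have "?F * ?H = ?G" using S_fps[OF assms] by simp
  then have "?G $ n = (?F * ?H) $ n" by simp
  then show ?thesis by (simp add: fps_mult_nth)
qed



lemma parts_from_restrict:
  assumes "m \<le> k"
  shows "parts_from A m = parts_from (A \<inter> {..k}) m"
  unfolding parts_from_def using assms by (auto dest: mem_le_sum)

lemma parts_from_bounded_restrict: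
  assumes "m \<le> k"
  shows "parts_from_bounded A c m = parts_from_bounded (A \<inter> {..k}) c m"
  unfolding parts_from_bounded_def using parts_from_restrict[OF assms] by simp

lemma T_conv_A:
  assumes "\<forall>b\<in>A. b > 0"
  shows "T A n = (\<Sum>i=0..n. S A i * (if even (n - i) then T A ((n - i) div 2) else 0))"
proof -
  let ?B = "A \<inter> {..n}"
  have "T A n = T ?B n" unfolding T_def using parts_from_bounded_restrict[of n n] by simp
  also have "\<dots> = (\<Sum>i=0..n. S ?B i * (if even (n - i) then T ?B ((n - i) div 2) else 0))"
    by (rule T_conv) (use assms in auto)
  also have "\<dots> = (\<Sum>i=0..n. S A i * (if even (n - i) then T A ((n - i) div 2) else 0))"
  proof (rule sum.cong)
    fix i assume i: "i \<in> {0..n}"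
    have "S ?B i = S A i" unfolding S_def using parts_from_restrict[of i n A] i by simp
    moreover have "T ?B ((n - i) div 2) = T A ((n - i) div 2)"
      unfolding T_def using parts_from_bounded_restrict[of "(n - i) div 2" n A] by simp
    ultimately show "S ?B i * (if even (n - i) then T ?B ((n - i) div 2) else 0) =
        S A i * (if even (n - i) then T A ((n - i) div 2) else 0)" by simp
  qed simp
  finally show ?thesis .
qed

lemma supp_case_nat: "{j. case_nat i M j \<noteq> (0::nat)} \<subseteq> insert 0 (Suc ` {j. M j \<noteq> 0})"
proof
  fix x assume "x \<in> {j. case_nat i M j \<noteq> (0::nat)}"
  then show "x \<in> insert 0 (Suc ` {j. M j \<noteq> 0})" by (cases x) auto
qed

lemma W_case_nat:
  assumes "finite {j. M j \<noteq> 0}"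
  shows "(\<Sum>j\<in>{j. case_nat i M j \<noteq> 0}. 2 ^ j * case_nat i M j) = i + 2 * (\<Sum>j\<in>{j. M j \<noteq> (0::nat)}. 2 ^ j * M j)"
proof -
  let ?S = "{j. M j \<noteq> 0}"
  have "(\<Sum>j\<in>{j. case_nat i M j \<noteq> 0}. 2 ^ j * case_nat i M j) = (\<Sum>j\<in>insert 0 (Suc ` ?S). 2 ^ j * case_nat i M j)"
    by (rule sum.mono_neutral_left) (use assms supp_case_nat in auto)
  also have "\<dots> = i + (\<Sum>j\<in>Suc ` ?S. 2 ^ j * case_nat i M j)"
    using assms by (subst sum.insert) auto
  also have "(\<Sum>j\<in>Suc ` ?S. 2 ^ j * case_nat i M j) = (\<Sum>j\<in>?S. 2 ^ Suc j * M j)"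
    by (subst sum.reindex) auto
  also have "\<dots> = 2 * (\<Sum>j\<in>?S. 2 ^ j * M j)"
    by (simp add: sum_distrib_left mult.assoc)
  finally show ?thesis .
qed

lemma P_case_nat:
  assumes "finite {j. M j \<noteq> 0}" "f 0 = (1::int)"
  shows "(\<Prod>j\<in>{j. case_nat i M j \<noteq> 0}. f (case_nat i M j)) = f i * (\<Prod>j\<in>{j. M j \<noteq> (0::nat)}. f (M j))"
proof -
  let ?S = "{j. M j \<noteq> 0}"
  have "(\<Prod>j\<in>{j. case_nat i M j \<noteq> 0}. f (case_nat i M j)) = (\<Prod>j\<in>insert 0 (Suc ` ?S). f (case_nat i M j))"
    by (rule prod.mono_neutral_left) (use assms supp_case_nat in auto)
  also have "\<dots> = f i * (\<Prod>j\<in>Suc ` ?S. f (case_nat i M j))"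
    using assms by (subst prod.insert) auto
  also have "(\<Prod>j\<in>Suc ` ?S. f (case_nat i M j)) = (\<Prod>j\<in>?S. f (M j))"
    by (subst prod.reindex) auto
  finally show ?thesis .
qed

definition Idx :: "nat \<Rightarrow> nat set" where "Idx n = {i. i \<le> n \<and> even (n - i)}"

lemma bin_seqs_decomp:
  "bin_seqs n = (\<lambda>(i, M). case_nat i M) ` (SIGMA i:Idx n. bin_seqs ((n - i) div 2))"
proof (rule set_eqI, rule iffI)
  fix N assume N: "N \<in> bin_seqs n"
  let ?M = "\<lambda>j. N (Suc j)"
  have eq: "N = case_nat (N 0) ?M" by (rule ext) (simp split: nat.splits)
  have fS: "finite {j. N j \<noteq> 0}" using N unfolding bin_seqs_def by simp
  have v: "finite (Suc -` {j. N j \<noteq> 0})" by (rule finite_vimageI[OF fS]) simp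
  have ve: "{j. ?M j \<noteq> 0} = Suc -` {j. N j \<noteq> 0}" by auto
  have fM: "finite {j. ?M j \<noteq> 0}" unfolding ve by (rule v)
  have "n = (\<Sum>j\<in>{j. N j \<noteq> 0}. 2 ^ j * N j)" using N unfolding bin_seqs_def by simp
  also have "\<dots> = N 0 + 2 * (\<Sum>j\<in>{j. ?M j \<noteq> 0}. 2 ^ j * ?M j)"
    using W_case_nat[OF fM, of "N 0"] eq by simp
  finally have w: "n = N 0 + 2 * (\<Sum>j\<in>{j. ?M j \<noteq> 0}. 2 ^ j * ?M j)" .
  then have "N 0 \<in> Idx n" unfolding Idx_def by simp
  moreover have "?M \<in> bin_seqs ((n - N 0) div 2)" unfolding bin_seqs_def using fM w by simp
  ultimately show "N \<in> (\<lambda>(i, M). case_nat i M) ` (SIGMA i:Idx n. bin_seqs ((n - i) div 2))"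
    using eq by force
next
  fix N assume "N \<in> (\<lambda>(i, M). case_nat i M) ` (SIGMA i:Idx n. bin_seqs ((n - i) div 2))"
  then obtain i M where iM: "N = case_nat i M" "i \<in> Idx n" "M \<in> bin_seqs ((n - i) div 2)" by auto
  have fM: "finite {j. M j \<noteq> 0}" using iM(3) unfolding bin_seqs_def by simp
  have "finite {j. N j \<noteq> 0}"
    using iM(1) supp_case_nat[of i M] fM by (auto intro: finite_subset)
  moreover have "(\<Sum>j\<in>{j. N j \<noteq> 0}. 2 ^ j * N j) = n"
    using W_case_nat[OF fM, of i] iM unfolding bin_seqs_def Idx_def by auto
  ultimately show "N \<in> bin_seqs n" unfolding bin_seqs_def by simp
qed

lemma inj_case_nat: "inj_on (\<lambda>(i, M). case_nat i M) X"
proof (rule inj_onI, clarify)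
  fix i M i' M'
  assume h: "case_nat i M = (case_nat i' M' :: nat \<Rightarrow> 'a)"
  have "i = i'" using fun_cong[OF h, of 0] by simp
  moreover have "M = M'"
  proof
    fix j show "M j = M' j" using fun_cong[OF h, of "Suc j"] by simp
  qed
  ultimately show "i = i' \<and> M = M'" by simp
qed

lemma bin_seqs_0: "bin_seqs 0 = {\<lambda>_. 0}"
proof (rule set_eqI, rule iffI)
  fix N assume N: "N \<in> bin_seqs 0"
  have "\<forall>j\<in>{j. N j \<noteq> 0}. 2 ^ j * N j = 0" using N unfolding bin_seqs_def
    by (subst sum_eq_0_iff[symmetric]) auto
  then have "\<forall>j. N j = 0" by auto
  then show "N \<in> {\<lambda>_. 0}" by auto
qed (auto simp: bin_seqs_def)

lemma finite_Idx: "finite (Idx n)" unfolding Idx_def by auto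

lemma finite_bin_seqs: "finite (bin_seqs n)"
proof (induction n rule: less_induct)
  case (less n)
  show ?case
  proof (cases "n = 0")
    case True then show ?thesis by (simp add: bin_seqs_0)
  next
    case False
    have "finite (SIGMA i:Idx n. bin_seqs ((n - i) div 2))"
      using finite_Idx less False by (intro finite_SigmaI) auto
    then show ?thesis by (subst bin_seqs_decomp) simp
  qed
qed

definition R :: "nat set \<Rightarrow> nat \<Rightarrow> int" where
  "R A n = (\<Sum>N\<in>bin_seqs n. \<Prod>j\<in>{j. N j \<noteq> 0}. pbar A (N j))"

lemma R_rec: "R A n = (\<Sum>i=0..n. pbar A i * (if even (n - i) then R A ((n - i) div 2) else 0))"
proof -
  let ?f = "\<lambda>N. \<Prod>j\<in>{j. N j \<noteq> 0}. pbar A (N j)"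
  have p0: "pbar A 0 = 1" by (simp add: pbar_def)
  have "R A n = (\<Sum>N\<in>(\<lambda>(i, M). case_nat i M) ` (SIGMA i:Idx n. bin_seqs ((n - i) div 2)). ?f N)"
    unfolding R_def by (subst bin_seqs_decomp) simp
  also have "\<dots> = (\<Sum>(i, M)\<in>(SIGMA i:Idx n. bin_seqs ((n - i) div 2)). ?f (case_nat i M))"
    by (subst sum.reindex[OF inj_case_nat]) (simp add: case_prod_unfold)
  also have "\<dots> = (\<Sum>(i, M)\<in>(SIGMA i:Idx n. bin_seqs ((n - i) div 2)). pbar A i * ?f M)"
  proof (rule sum.cong, simp, clarify)
    fix i M assume "M \<in> bin_seqs ((n - i) div 2)"
    then have "finite {j. M j \<noteq> 0}" unfolding bin_seqs_def by simp
    then show "?f (case_nat i M) = pbar A i * ?f M" by (rule P_case_nat) (rule p0)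
  qed
  also have "\<dots> = (\<Sum>i\<in>Idx n. \<Sum>M\<in>bin_seqs ((n - i) div 2). pbar A i * ?f M)"
    by (rule sum.Sigma[symmetric]) (auto simp: finite_Idx finite_bin_seqs)
  also have "\<dots> = (\<Sum>i\<in>Idx n. pbar A i * R A ((n - i) div 2))"
    unfolding R_def by (simp add: sum_distrib_left)
  also have "\<dots> = (\<Sum>i\<in>{i\<in>{0..n}. even (n - i)}. pbar A i * R A ((n - i) div 2))"
    unfolding Idx_def by (rule sum.cong) auto
  also have "\<dots> = (\<Sum>i=0..n. if even (n - i) then pbar A i * R A ((n - i) div 2) else 0)"
    by (rule sum.inter_filter) simp
  also have "\<dots> = (\<Sum>i=0..n. pbar A i * (if even (n - i) then R A ((n - i) div 2) else 0))"
    by (rule sum.cong) auto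
  finally show ?thesis .
qed

lemma T_eq_R:
  assumes "\<forall>b\<in>A. b > 0"
  shows "T A n = R A n"
proof (induction n rule: less_induct)
  case (less n)
  show ?case
  proof (cases "n = 0")
    case True
    have "T A 0 = 1" unfolding T_def by (simp add: parts_from_bounded_0)
    moreover have "R A 0 = 1" unfolding R_def by (simp add: bin_seqs_0)
    ultimately show ?thesis using True by simp
  next
    case False
    have "T A n = (\<Sum>i=0..n. S A i * (if even (n - i) then T A ((n - i) div 2) else 0))"
      by (rule T_conv_A[OF assms])
    also have "\<dots> = (\<Sum>i=0..n. pbar A i * (if even (n - i) then R A ((n - i) div 2) else 0))"
    proof (rule sum.cong)
      fix i assume "i \<in> {0..n}"
      have "(n - i) div 2 < n" using False by simp
      then show "S A i * (if even (n - i) then T A ((n - i) div 2) else 0) =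
          pbar A i * (if even (n - i) then R A ((n - i) div 2) else 0)"
        using less by (simp add: pbar_S)
    qed simp
    also have "\<dots> = R A n" by (rule R_rec[symmetric])
    finally show ?thesis .
  qed
qed

theorem mainTheorem4:
  fixes \<psi> :: "nat \<Rightarrow> nat" and A :: "nat set" and n :: nat
  assumes "inj_on \<psi> {1..}"
    and "\<forall>k\<ge>1. \<psi> k \<ge> 1"
    and "A = \<psi> ` {1..}"
  shows "pbar_bd A 1 n = (\<Sum>N\<in>bin_seqs n. \<Prod>j\<in>{j. N j \<noteq> 0}. pbar A (N j))"
proof -
  have pos: "\<forall>b\<in>A. b > 0" using assms(2,3) by force
  have "pbar_bd A 1 n = T A n" by (rule pbar_bd_T)
  also have "\<dots> = R A n" by (rule T_eq_R[OF pos])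
  finally show ?thesis unfolding R_def .
qed


end
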